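(* Let $A=\mathrm{diag}(\mathbf{a})$ with $\mathbf{a}\in\mathbb{R}^n$, $\beta>0$, and $f(\mathbf{z})=\frac12\mathbf{z}^*A\mathbf{z}+\frac{\beta}{2}\sum_k|z_k|^4$ on $\mathbb{CS}^{n-1}$. Then the KL exponent of $\min_{\mathbf{z}\in\mathbb{CS}^{n-1}}f(\mathbf{z})$ is $\frac14$.
   Context: $\mathbb{CS}^{n-1}$ is the unit sphere of $\mathbb{C}^n$. For $\mathbf{y}\in\mathbb{CS}^{n-1}$ let $\lambda(\mathbf{y})=\frac12\mathbf{y}^*A\mathbf{y}+\beta\|\mathbf{y}\|_4^4$ and $\|\mathrm{grad} f(\mathbf{y})\|=\sqrt2\,\big\|\frac12A\mathbf{y}+\beta\,\mathrm{diag}(|y_1|^2,\dots,|y_n|^2)\mathbf{y}-\lambda(\mathbf{y})\mathbf{y}\big\|_2$ (norm of the Riemannian Wirtinger gradient). $\mathbf{z}$ is a stationary point if $\mathrm{grad} f(\mathbf{z})=0$. The Łojasiewicz inequality with exponent $\theta\in(0,\frac12]$ holds at a stationary point $\mathbf{z}$ if there are $\delta_{\mathbf{z}},\eta_{\mathbf{z}}>0$ with $|f(\mathbf{y})-f(\mathbf{z})|^{1-\theta}\le\eta_{\mathbf{z}}\|\mathrm{grad} f(\mathbf{y})\|$ for all $\mathbf{y}\in\mathbb{CS}^{n-1}$ with $\|\mathbf{y}-\mathbf{z}\|<\delta_{\mathbf{z}}$. The KL exponent of the problem is the largest $\theta\in(0,\frac12]$ such that this inequality holds at every stationary point. *)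

theory Defs
  imports Complex_Main
begin

text \<open>Vectors in C^n are represented as functions nat => complex; only the
  coordinates k < n are relevant. A = diag(a) with a :: nat => real.\<close>

definition csphere :: "nat \<Rightarrow> (nat \<Rightarrow> complex) set" where
  "csphere n = {y. (\<Sum>k<n. (cmod (y k))^2) = 1}"

definition cdist :: "nat \<Rightarrow> (nat \<Rightarrow> complex) \<Rightarrow> (nat \<Rightarrow> complex) \<Rightarrow> real" where
  "cdist n y z = sqrt (\<Sum>k<n. (cmod (y k - z k))^2)"

definition fobj :: "nat \<Rightarrow> (nat \<Rightarrow> real) \<Rightarrow> real \<Rightarrow> (nat \<Rightarrow> complex) \<Rightarrow> real" where
  "fobj n a \<beta> z = Re ((1/2) * (\<Sum>k<n. cnj (z k) * complex_of_real (a k) * z k))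
     + \<beta> / 2 * (\<Sum>k<n. (cmod (z k))^4)"

definition lam :: "nat \<Rightarrow> (nat \<Rightarrow> real) \<Rightarrow> real \<Rightarrow> (nat \<Rightarrow> complex) \<Rightarrow> real" where
  "lam n a \<beta> y = Re ((1/2) * (\<Sum>k<n. cnj (y k) * complex_of_real (a k) * y k))
     + \<beta> * (\<Sum>k<n. (cmod (y k))^4)"

text \<open>norm of the Riemannian Wirtinger gradient:
  sqrt 2 * || 1/2 A y + beta diag(|y_1|^2,...,|y_n|^2) y - lambda(y) y ||_2\<close>
definition gradnorm :: "nat \<Rightarrow> (nat \<Rightarrow> real) \<Rightarrow> real \<Rightarrow> (nat \<Rightarrow> complex) \<Rightarrow> real" where
  "gradnorm n a \<beta> y = sqrt 2 * sqrt (\<Sum>k<n. (cmod (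
      (1/2) * complex_of_real (a k) * y k
      + complex_of_real (\<beta> * (cmod (y k))^2) * y k
      - complex_of_real (lam n a \<beta> y) * y k))^2)"

definition stationary :: "nat \<Rightarrow> (nat \<Rightarrow> real) \<Rightarrow> real \<Rightarrow> (nat \<Rightarrow> complex) \<Rightarrow> bool" where
  "stationary n a \<beta> z \<longleftrightarrow> z \<in> csphere n \<and> gradnorm n a \<beta> z = 0"

definition loj_at :: "nat \<Rightarrow> (nat \<Rightarrow> real) \<Rightarrow> real \<Rightarrow> real \<Rightarrow> (nat \<Rightarrow> complex) \<Rightarrow> bool" where
  "loj_at n a \<beta> \<theta> z \<longleftrightarrow> (\<exists>\<delta>>0. \<exists>\<eta>>0. \<forall>y\<in>csphere n. cdist n y z < \<delta> \<longrightarrow>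
      \<bar>fobj n a \<beta> y - fobj n a \<beta> z\<bar> powr (1 - \<theta>) \<le> \<eta> * gradnorm n a \<beta> y)"

definition kl_holds :: "nat \<Rightarrow> (nat \<Rightarrow> real) \<Rightarrow> real \<Rightarrow> real \<Rightarrow> bool" where
  "kl_holds n a \<beta> \<theta> \<longleftrightarrow> (\<forall>z. stationary n a \<beta> z \<longrightarrow> loj_at n a \<beta> \<theta> z)"

definition is_kl_exponent :: "nat \<Rightarrow> (nat \<Rightarrow> real) \<Rightarrow> real \<Rightarrow> real \<Rightarrow> bool" where
  "is_kl_exponent n a \<beta> \<theta> \<longleftrightarrow> \<theta> \<in> {0<..1/2} \<and> kl_holds n a \<beta> \<theta> \<and>
      (\<forall>\<theta>'\<in>{0<..1/2}. kl_holds n a \<beta> \<theta>' \<longrightarrow> \<theta>' \<le> \<theta>)"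

end

theory Submission
  imports Defs
begin


lemma re_term: "Re (cnj z * complex_of_real r * z) = r * (cmod z)^2"
  unfolding cmod_power2 by (simp add: power2_eq_square algebra_simps)

lemma re_half_sum: "Re ((1/2) * (\<Sum>k<n. cnj (y k) * complex_of_real (a k) * y k)) = (\<Sum>k<n. a k / 2 * (cmod (y k))^2)"
proof -
  have "Re ((1/2) * (\<Sum>k<n. cnj (y k) * complex_of_real (a k) * y k)) = (1/2) * (\<Sum>k<n. Re (cnj (y k) * complex_of_real (a k) * y k))"
    by (simp only: Re_sum Re_divide_numeral mult_1 times_divide_eq_left)
  also have "\<dots> = (\<Sum>k<n. a k / 2 * (cmod (y k))^2)"
    by (simp only: re_term sum_distrib_left) (simp add: algebra_simps)
  finally show ?thesis .
qed

lemma fobj_real: "fobj n a \<beta> y = (\<Sum>k<n. a k / 2 * (cmod (y k))^2 + \<beta>/2 * ((cmod (y k))^2)^2)"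
  unfolding fobj_def re_half_sum by (simp add: sum.distrib sum_distrib_left power_mult[symmetric])

lemma lam_real: "lam n a \<beta> y = (\<Sum>k<n. a k / 2 * (cmod (y k))^2 + \<beta> * ((cmod (y k))^2)^2)"
  unfolding lam_def re_half_sum by (simp add: sum.distrib sum_distrib_left power_mult[symmetric])

lemma grad_term: "cmod ((1/2) * complex_of_real (a) * y + complex_of_real (\<beta> * (cmod y)^2) * y
      - complex_of_real l * y) ^ 2 = (cmod y)^2 * (a/2 + \<beta> * (cmod y)^2 - l)^2"
proof -
  have "(1/2) * complex_of_real (a) * y + complex_of_real (\<beta> * (cmod y)^2) * y
      - complex_of_real l * y = complex_of_real (a/2 + \<beta> * (cmod y)^2 - l) * y"
    by (simp add: algebra_simps)
  then have "cmod ((1/2) * complex_of_real (a) * y + complex_of_real (\<beta> * (cmod y)^2) * y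
      - complex_of_real l * y) = \<bar>a/2 + \<beta> * (cmod y)^2 - l\<bar> * cmod y"
    by (simp only: norm_mult norm_of_real)
  then show ?thesis by (simp add: power_mult_distrib)
qed

lemma gradnorm_real: "gradnorm n a \<beta> y = sqrt 2 * sqrt (\<Sum>k<n. (cmod (y k))^2 * (a k/2 + \<beta> * (cmod (y k))^2 - lam n a \<beta> y)^2)"
  unfolding gradnorm_def by (simp only: grad_term)



lemma sq_le_abs: "x^2 \<le> y^2 \<Longrightarrow> (y::real) \<ge> 0 \<Longrightarrow> \<bar>x\<bar> \<le> y"
  by (metis abs_le_square_iff abs_of_nonneg)

lemma cube_le: assumes "(p::real)^3 \<le> C * w^3" "w \<ge> 0" "C \<le> c" "1 \<le> c" "p \<ge> 0" shows "p \<le> c * w"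
proof (rule ccontr)
  assume "\<not> p \<le> c * w"
  then have h: "c * w < p" by simp
  have "0 \<le> c * w" using assms by simp
  then have "(c*w)^3 < p^3" using h by (simp add: power_strict_mono)
  moreover have "C * w^3 \<le> (c*w)^3"
  proof -
    have "C * w^3 \<le> c * w^3" using assms by (simp add: mult_right_mono)
    also have "\<dots> \<le> c^3 * w^3" using assms power_increasing[of 1 3 c]
      by (intro mult_right_mono) auto
    finally show ?thesis by (simp add: power_mult_distrib)
  qed
  ultimately show False using assms(1) by simp
qed

lemma main_real:
  fixes n :: nat and a q :: "nat \<Rightarrow> real" and \<beta> \<mu> :: real
  assumes bpos: "\<beta> > 0" and qnn: "\<forall>k<n. q k \<ge> 0" and qsum: "(\<Sum>k<n. q k) = 1"
    and stat: "\<forall>k<n. q k > 0 \<longrightarrow> a k / 2 + \<beta> * q k = \<mu>"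
  shows "\<exists>\<epsilon>>0. \<exists>K>0. \<forall>p s \<omega>. (\<forall>k<n. p k \<ge> 0) \<longrightarrow> (\<Sum>k<n. p k) = 1 \<longrightarrow> (\<forall>k<n. \<bar>p k - q k\<bar> < \<epsilon>) \<longrightarrow> \<omega> \<ge> 0 \<longrightarrow>
     (\<Sum>k<n. p k * (a k/2 + \<beta> * p k - \<mu> - s)^2) \<le> \<omega>^3 \<longrightarrow>
     \<bar>(\<Sum>k<n. a k/2 * p k + \<beta>/2 * (p k)^2) - (\<Sum>k<n. a k/2 * q k + \<beta>/2 * (q k)^2)\<bar> \<le> K * \<omega>^2"
proof -
  define I where "I = {..<n}"
  have finI: "finite I" unfolding I_def by simp
  define e where "e k = a k/2 + \<beta>*q k - \<mu>" for k
  define S where "S = {k\<in>I. q k > 0}"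
  have SI: "S \<subseteq> I" unfolding S_def by auto
  have finS: "finite S" using finI SI finite_subset by blast
  have eS: "e k = 0" if "k \<in> S" for k using that stat unfolding S_def e_def I_def by auto
  have qT: "q k = 0" if "k \<in> I" "k \<notin> S" for k using that qnn unfolding S_def I_def by force
  have Sne: "S \<noteq> {}"
  proof
    assume "S = {}"
    then have "\<forall>k\<in>I. q k = 0" using qT by auto
    then have "(\<Sum>k<n. q k) = 0" unfolding I_def by simp
    then show False using qsum by simp
  qed
  define \<rho> where "\<rho> = Min ((\<lambda>k. q k/2) ` S)"
  have rho_le: "\<rho> \<le> q k / 2" if "k \<in> S" for k unfolding \<rho>_def using finS that by (intro Min_le) auto
  have rho_pos: "\<rho> > 0" unfolding \<rho>_def using finS Sne by (subst Min_gr_iff) (auto simp: S_def)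
  define r0 where "r0 = Min (insert 1 ((\<lambda>k. \<bar>e k\<bar>) ` {k\<in>I. e k \<noteq> 0}))"
  have r0_le: "r0 \<le> \<bar>e k\<bar>" if "k \<in> I" "e k \<noteq> 0" for k unfolding r0_def using finI that by auto
  have r0_pos: "r0 > 0" unfolding r0_def using finI by (subst Min_gr_iff) auto
  define R where "R = (\<Sum>k\<in>I. \<bar>e k\<bar>)"
  have R_ge: "\<bar>e k\<bar> \<le> R" if "k \<in> I" for k unfolding R_def using finI that
    by (intro member_le_sum) auto
  define c where "c = max 1 (max (2/\<beta>) (4/\<beta>^2))"
  have c1: "1 \<le> c" "2/\<beta> \<le> c" "4/\<beta>^2 \<le> c" unfolding c_def by auto
  define \<epsilon> where "\<epsilon> = min \<rho> (r0/(8*\<beta>*(n+1)))"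
  have eps_pos: "\<epsilon> > 0" unfolding \<epsilon>_def using rho_pos r0_pos bpos by auto
  have eps_rho: "\<epsilon> \<le> \<rho>" unfolding \<epsilon>_def by auto
  have eps_r0: "\<beta> * (n * \<epsilon>) \<le> r0/8" "\<beta> * \<epsilon> \<le> r0/8"
  proof -
    have "\<epsilon> \<le> r0/(8*\<beta>*(n+1))" unfolding \<epsilon>_def by auto
    then have "\<beta> * ((n+1) * \<epsilon>) \<le> \<beta> * ((n+1) * (r0/(8*\<beta>*(n+1))))"
      using bpos by (intro mult_left_mono) auto
    also have "\<dots> = r0/8"
    proof -
      have gen: "\<And>N::real. N \<noteq> 0 \<Longrightarrow> \<beta> * (N * (r0/(8*\<beta>*N))) = r0/8" using bpos by (simp add: field_simps)
      have "real n + 1 \<noteq> 0" by simp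
      from gen[OF this] show ?thesis by simp
    qed
    finally have h: "\<beta> * ((n+1) * \<epsilon>) \<le> r0/8" .
    have "\<beta> * (n * \<epsilon>) \<le> \<beta> * ((n+1) * \<epsilon>)" using bpos eps_pos by (intro mult_left_mono) auto
    with h show "\<beta> * (n * \<epsilon>) \<le> r0/8" by linarith
    have "\<beta> * \<epsilon> \<le> \<beta> * ((n+1) * \<epsilon>)" using bpos eps_pos by (intro mult_left_mono) auto
    with h show "\<beta> * \<epsilon> \<le> r0/8" by linarith
  qed
  define \<omega>0 where "\<omega>0 = min \<rho> (r0/8)"
  have w0_pos: "\<omega>0 > 0" unfolding \<omega>0_def using rho_pos r0_pos by auto
  define M where "M = (\<Sum>k\<in>I. \<bar>e k\<bar> + \<beta>/2)"
  define K1 where "K1 = (2 + \<beta>*n*c)^2/(2*\<beta>) + \<beta>/2*c^2 + 4*R*\<omega>0/r0^2 + \<beta>/2"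
  define K where "K = n*K1 + M/\<omega>0^2 + 1"
  have M_nn: "M \<ge> 0" unfolding M_def using bpos by (intro sum_nonneg) auto
  have R_nn: "R \<ge> 0" unfolding R_def by (intro sum_nonneg) auto
  have K1_nn: "K1 \<ge> 0" unfolding K1_def using bpos R_nn w0_pos r0_pos by (intro add_nonneg_nonneg) auto
  have K_pos: "K > 0" unfolding K_def using K1_nn M_nn w0_pos by (intro add_nonneg_pos) auto
  show ?thesis
  proof (rule exI[of _ \<epsilon>], intro conjI eps_pos, rule exI[of _ K], intro conjI K_pos allI impI)
    fix p :: "nat \<Rightarrow> real" and s \<omega> :: real
    assume pnn': "\<forall>k<n. p k \<ge> 0" and psum': "(\<Sum>k<n. p k) = 1" and pclose': "\<forall>k<n. \<bar>p k - q k\<bar> < \<epsilon>"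
      and w_nn: "\<omega> \<ge> 0" and W': "(\<Sum>k<n. p k * (a k/2 + \<beta> * p k - \<mu> - s)^2) \<le> \<omega>^3"
    have pnn: "\<And>k. k \<in> I \<Longrightarrow> p k \<ge> 0" using pnn' unfolding I_def by auto
    have qnn2: "\<And>k. k \<in> I \<Longrightarrow> q k \<ge> 0" using qnn unfolding I_def by auto
    have psum: "(\<Sum>k\<in>I. p k) = 1" using psum' unfolding I_def by simp
    have qsum2: "(\<Sum>k\<in>I. q k) = 1" using qsum unfolding I_def by simp
    have pclose: "\<And>k. k \<in> I \<Longrightarrow> \<bar>p k - q k\<bar> < \<epsilon>" using pclose' unfolding I_def by auto
    have ple1: "p k \<le> 1" if "k \<in> I" for k
    proof -
      have "p k \<le> (\<Sum>k\<in>I. p k)" using finI that pnn by (intro member_le_sum) auto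
      then show ?thesis using psum by simp
    qed
    have qle1: "q k \<le> 1" if "k \<in> I" for k
    proof -
      have "q k \<le> (\<Sum>k\<in>I. q k)" using finI that qnn2 by (intro member_le_sum) auto
      then show ?thesis using qsum2 by simp
    qed
    define d where "d k = p k - q k" for k
    define w where "w k = a k/2 + \<beta> * p k - \<mu> - s" for k
    have w_eq: "w k = e k + \<beta> * d k - s" for k unfolding w_def e_def d_def by (simp add: algebra_simps)
    have W: "(\<Sum>k\<in>I. p k * (w k)^2) \<le> \<omega>^3" using W' unfolding I_def w_def by simp
    have Wk: "p k * (w k)^2 \<le> \<omega>^3" if "k \<in> I" for k
    proof -
      have "p k * (w k)^2 \<le> (\<Sum>k\<in>I. p k * (w k)^2)" using finI that pnn by (intro member_le_sum) auto
      then show ?thesis using W by simp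
    qed
    define \<tau> where "\<tau> k = e k * d k + \<beta>/2 * (d k)^2" for k
    have dsum: "(\<Sum>k\<in>I. d k) = 0" unfolding d_def using psum qsum2 by (simp add: sum_subtractf)
    have dF: "(\<Sum>k<n. a k/2 * p k + \<beta>/2 * (p k)^2) - (\<Sum>k<n. a k/2 * q k + \<beta>/2 * (q k)^2) = (\<Sum>k\<in>I. \<tau> k)"
    proof -
      have "(\<Sum>k<n. a k/2 * p k + \<beta>/2 * (p k)^2) - (\<Sum>k<n. a k/2 * q k + \<beta>/2 * (q k)^2)
          = (\<Sum>k\<in>I. \<mu> * d k + \<tau> k)"
        unfolding I_def sum_subtractf[symmetric]
        by (intro sum.cong refl) (simp add: \<tau>_def d_def e_def power2_eq_square field_simps)
      also have "\<dots> = \<mu> * (\<Sum>k\<in>I. d k) + (\<Sum>k\<in>I. \<tau> k)" by (simp add: sum.distrib sum_distrib_left)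
      finally show ?thesis using dsum by simp
    qed
    have absF: "\<bar>(\<Sum>k<n. a k/2 * p k + \<beta>/2 * (p k)^2) - (\<Sum>k<n. a k/2 * q k + \<beta>/2 * (q k)^2)\<bar> \<le> (\<Sum>k\<in>I. \<bar>\<tau> k\<bar>)"
      unfolding dF by (rule sum_abs)
    show "\<bar>(\<Sum>k<n. a k/2 * p k + \<beta>/2 * (p k)^2) - (\<Sum>k<n. a k/2 * q k + \<beta>/2 * (q k)^2)\<bar> \<le> K * \<omega>^2"
    proof (cases "\<omega> \<ge> \<omega>0")
      case True
      have "\<bar>\<tau> k\<bar> \<le> \<bar>e k\<bar> + \<beta>/2" if "k \<in> I" for k
      proof -
        have dk: "\<bar>d k\<bar> \<le> 1" unfolding d_def using pnn[OF that] qnn2[OF that] ple1[OF that] qle1[OF that] by auto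
        then have "(d k)^2 \<le> 1" by (simp add: abs_square_le_1)
        then have "\<beta>/2 * (d k)^2 \<le> \<beta>/2" using bpos by (simp add: mult_left_le)
        moreover have "\<bar>e k * d k\<bar> \<le> \<bar>e k\<bar>" using dk by (simp add: abs_mult mult_left_le)
        moreover have "0 \<le> \<beta>/2*(d k)^2" using bpos by simp
        moreover have "\<bar>e k * d k + \<beta>/2 * (d k)^2\<bar> \<le> \<bar>e k * d k\<bar> + \<bar>\<beta>/2 * (d k)^2\<bar>" by (rule abs_triangle_ineq)
        ultimately show ?thesis unfolding \<tau>_def by linarith
      qed
      then have "(\<Sum>k\<in>I. \<bar>\<tau> k\<bar>) \<le> M" unfolding M_def by (intro sum_mono) auto
      also have "M \<le> M / \<omega>0^2 * \<omega>^2"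
      proof -
        have "\<omega>0^2 \<le> \<omega>^2" using True w0_pos by (intro power_mono) auto
        then have "1 \<le> \<omega>^2 / \<omega>0^2" using w0_pos by simp
        then have "M * 1 \<le> M * (\<omega>^2 / \<omega>0^2)" using M_nn by (intro mult_left_mono) auto
        then show ?thesis by simp
      qed
      also have "\<dots> \<le> K * \<omega>^2"
      proof -
        have "M / \<omega>0^2 \<le> K" unfolding K_def using K1_nn by simp
        then show ?thesis by (intro mult_right_mono) auto
      qed
      finally show ?thesis using absF by linarith
    next
      case False
      then have wsmall: "\<omega> < \<omega>0" by simp
      have w_lt: "\<omega> < r0/8" "\<omega> < \<rho>" using wsmall unfolding \<omega>0_def by auto
      have pS: "p k \<ge> \<rho>" if "k \<in> S" for k
      proof -
        have "k \<in> I" using that SI by auto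
        then have "\<bar>p k - q k\<bar> < \<epsilon>" by (rule pclose)
        moreover have "2 * \<rho> \<le> q k" using rho_le[OF that] by simp
        ultimately show ?thesis using eps_rho by linarith
      qed
      have pT: "p k < \<epsilon>" "d k = p k" if "k \<in> I" "k \<notin> S" for k
        using pclose[OF that(1)] qT[OF that] unfolding d_def by auto
      have wS: "\<bar>\<beta> * d k - s\<bar> \<le> \<omega>" if "k \<in> S" for k
      proof -
        have kI: "k \<in> I" using that SI by auto
        have "\<rho> * (w k)^2 \<le> p k * (w k)^2" using pS[OF that] by (intro mult_right_mono) auto
        also have "\<dots> \<le> \<omega>^3" by (rule Wk[OF kI])
        also have "\<dots> = \<omega> * \<omega>^2" by (simp add: power3_eq_cube power2_eq_square)
        also have "\<dots> \<le> \<rho> * \<omega>^2" using w_lt w_nn by (intro mult_right_mono) auto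
        finally have "(w k)^2 \<le> \<omega>^2" using rho_pos by simp
        then have "\<bar>w k\<bar> \<le> \<omega>" using w_nn by (rule sq_le_abs)
        then show ?thesis using w_eq[of k] eS[OF that] by simp
      qed
      define P where "P = (\<Sum>k\<in>I-S. p k)"
      have P_nn: "P \<ge> 0" unfolding P_def using pnn by (intro sum_nonneg) auto
      have dSsum: "(\<Sum>k\<in>S. d k) = - P"
      proof -
        have "(\<Sum>k\<in>I. d k) = (\<Sum>k\<in>S. d k) + (\<Sum>k\<in>I-S. d k)"
          using finI SI by (metis add.commute sum.subset_diff)
        moreover have "(\<Sum>k\<in>I-S. d k) = P" unfolding P_def using pT by (intro sum.cong) auto
        ultimately show ?thesis using dsum by simp
      qed
      have P_le: "P \<le> n * \<epsilon>"
      proof -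
        have "P \<le> (\<Sum>k\<in>I-S. \<epsilon>)" unfolding P_def using pT by (intro sum_mono) (auto intro: less_imp_le)
        also have "\<dots> = card (I-S) * \<epsilon>" by simp
        also have "\<dots> \<le> n * \<epsilon>"
        proof -
          have "card (I-S) \<le> card I" using finI by (intro card_mono) auto
          then have "card (I-S) \<le> n" unfolding I_def by simp
          then show ?thesis using eps_pos by (intro mult_right_mono) auto
        qed
        finally show ?thesis .
      qed
      have s_up: "s \<le> \<omega>"
      proof -
        have "\<exists>j\<in>S. d j \<le> 0"
        proof (rule ccontr)
          assume "\<not> ?thesis"
          then have "\<forall>j\<in>S. d j > 0" by force
          then have "(\<Sum>k\<in>S. d k) > 0" using finS Sne by (intro sum_pos) auto
          then show False using dSsum P_nn by simp
        qed
        then obtain j where j: "j \<in> S" "d j \<le> 0" by blast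
        have "\<bar>\<beta> * d j - s\<bar> \<le> \<omega>" by (rule wS[OF j(1)])
        moreover have "\<beta> * d j \<le> 0" using j(2) bpos by (simp add: mult_nonneg_nonpos)
        ultimately show ?thesis by linarith
      qed
      have s_lo: "- s \<le> \<omega> + \<beta> * P"
      proof -
        have "\<exists>j\<in>S. d j \<ge> - P"
        proof (rule ccontr)
          assume "\<not> ?thesis"
          then have "\<forall>j\<in>S. d j < - P" by force
          then have "(\<Sum>k\<in>S. d k) < (\<Sum>k\<in>S. - P)" using finS Sne by (intro sum_strict_mono) auto
          also have "\<dots> = - (card S * P)" by simp
          also have "\<dots> \<le> - P"
          proof -
            have "card S \<ge> 1" using finS Sne by (simp add: Suc_le_eq card_gt_0_iff)
            then have "1 * P \<le> card S * P" using P_nn by (intro mult_right_mono) auto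
            then show ?thesis by simp
          qed
          finally show False using dSsum by simp
        qed
        then obtain j where j: "j \<in> S" "d j \<ge> - P" by blast
        have "\<bar>\<beta> * d j - s\<bar> \<le> \<omega>" by (rule wS[OF j(1)])
        moreover have "\<beta> * d j \<ge> - (\<beta> * P)" using mult_left_mono[OF j(2), of \<beta>] bpos by simp
        ultimately show ?thesis by linarith
      qed
      have bP: "\<beta> * P \<le> r0/8"
        using eps_r0(1) P_le bpos by (meson mult_left_mono less_imp_le order_trans)
      have s_abs: "\<bar>s\<bar> \<le> r0/4" using s_up s_lo bP w_lt by linarith
      have pT_e: "p k * r0^2 \<le> 4 * \<omega>^3" if "k \<in> I" "k \<notin> S" "e k \<noteq> 0" for k
      proof -
        have ek: "r0 \<le> \<bar>e k\<bar>" by (rule r0_le[OF that(1,3)])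
        have bp: "\<beta> * p k \<le> r0/8"
          using eps_r0(2) pT(1)[OF that(1,2)] bpos by (meson mult_left_mono less_imp_le order_trans)
        have bp0: "\<beta> * p k \<ge> 0" using pnn[OF that(1)] bpos by simp
        have wk: "w k = e k + \<beta> * p k - s" using w_eq[of k] pT(2)[OF that(1,2)] by simp
        have "r0/2 \<le> \<bar>w k\<bar>" using wk ek bp bp0 s_abs by linarith
        then have "(r0/2)^2 \<le> (w k)^2" using r0_pos by (metis abs_le_square_iff abs_of_pos half_gt_zero)
        then have "p k * (r0/2)^2 \<le> p k * (w k)^2" using pnn[OF that(1)] by (intro mult_left_mono) auto
        also have "\<dots> \<le> \<omega>^3" by (rule Wk[OF that(1)])
        finally show ?thesis by (simp add: power2_eq_square field_simps)
      qed
      have pT_le: "p k \<le> c * \<omega>" if "k \<in> I" "k \<notin> S" for k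
      proof (cases "e k = 0")
        case False
        have h: "p k * r0^2 \<le> 4 * \<omega>^3" by (rule pT_e[OF that False])
        have "4 * \<omega>^3 = (4 * \<omega>^2) * \<omega>" by (simp add: power3_eq_cube power2_eq_square)
        also have "\<dots> \<le> r0^2 * \<omega>"
        proof -
          have "\<omega>^2 \<le> (r0/8)^2" using w_nn w_lt by (intro power_mono) auto
          then have "64 * \<omega>^2 \<le> r0^2" by (simp add: power_divide)
          then have "4 * \<omega>^2 \<le> r0^2" using zero_le_power2[of \<omega>] by linarith
          then show ?thesis using w_nn by (intro mult_right_mono) auto
        qed
        finally have "p k * r0^2 \<le> \<omega> * r0^2" using h by (simp add: mult.commute)
        then have "p k \<le> \<omega>" using r0_pos by simp
        moreover have "1 * \<omega> \<le> c * \<omega>" using c1(1) w_nn by (intro mult_right_mono) auto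
        ultimately show ?thesis by simp
      next
        case True
        have wk: "w k = \<beta> * p k - s" using w_eq[of k] pT(2)[OF that] True by simp
        have pk0: "p k \<ge> 0" using pnn[OF that(1)] .
        show ?thesis
        proof (cases "\<beta> * p k \<ge> 2 * \<omega>")
          case True
          have "w k \<ge> \<beta> * p k / 2" using wk s_up True by linarith
          moreover have "\<beta> * p k / 2 \<ge> 0" using pk0 bpos by simp
          ultimately have "(\<beta> * p k / 2)^2 \<le> (w k)^2" by (intro power_mono) auto
          then have "p k * (\<beta> * p k / 2)^2 \<le> p k * (w k)^2" using pk0 by (intro mult_left_mono) auto
          also have "\<dots> \<le> \<omega>^3" by (rule Wk[OF that(1)])
          finally have "p k ^3 * (\<beta>^2/4) \<le> \<omega>^3" by (simp add: power2_eq_square power3_eq_cube field_simps)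
          then have "p k ^3 \<le> (4/\<beta>^2) * \<omega>^3" using bpos by (simp add: field_simps)
          then show ?thesis using cube_le w_nn c1(3) c1(1) pk0 by blast
        next
          case False
          then have "p k < 2 * \<omega> / \<beta>" using bpos by (simp add: field_simps)
          also have "\<dots> = (2/\<beta>) * \<omega>" by simp
          also have "\<dots> \<le> c * \<omega>" using c1(2) w_nn by (intro mult_right_mono) auto
          finally show ?thesis by simp
        qed
      qed
      have P_le2: "P \<le> n * c * \<omega>"
      proof -
        have "P \<le> (\<Sum>k\<in>I-S. c * \<omega>)" unfolding P_def using pT_le by (intro sum_mono) auto
        also have "\<dots> = card (I-S) * (c * \<omega>)" by simp
        also have "\<dots> \<le> n * (c * \<omega>)"
        proof -
          have "card (I-S) \<le> card I" using finI by (intro card_mono) auto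
          then have "card (I-S) \<le> n" unfolding I_def by simp
          moreover have "c * \<omega> \<ge> 0" using c1(1) w_nn by simp
          ultimately show ?thesis by (intro mult_right_mono) auto
        qed
        finally show ?thesis by simp
      qed
      have tau_le: "\<bar>\<tau> k\<bar> \<le> K1 * \<omega>^2" if "k \<in> I" for k
      proof -
        have parts: "0 \<le> (2 + \<beta>*n*c)^2/(2*\<beta>)" "0 \<le> \<beta>/2*c^2" "0 \<le> 4*R*\<omega>0/r0^2" "0 \<le> \<beta>/2"
          using bpos R_nn w0_pos r0_pos by auto
        have goal: "\<bar>\<tau> k\<bar> \<le> K1 * \<omega>^2" if "X \<le> K1" "\<bar>\<tau> k\<bar> \<le> X * \<omega>^2" for X
          using that(2) order_trans mult_right_mono[OF that(1), of "\<omega>^2"] by auto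
        show ?thesis
        proof (cases "k \<in> S")
          case True
          have "\<beta> * \<bar>d k\<bar> \<le> (2 + \<beta>*n*c) * \<omega>"
          proof -
            have a1: "\<bar>\<beta> * d k\<bar> \<le> \<bar>\<beta> * d k - s\<bar> + \<bar>s\<bar>" using abs_triangle_ineq[of "\<beta> * d k - s" s] by simp
            have a2: "\<bar>s\<bar> \<le> \<omega> + \<beta> * P"
              using s_up s_lo mult_nonneg_nonneg[of \<beta> P] P_nn bpos unfolding abs_le_iff by linarith
            have a3: "\<beta> * P \<le> \<beta> * (n * c * \<omega>)" using P_le2 bpos by (intro mult_left_mono) auto
            have a4: "\<bar>\<beta> * d k\<bar> = \<beta> * \<bar>d k\<bar>" using bpos by (simp add: abs_mult)
            have a5: "(2 + \<beta>*n*c) * \<omega> = 2 * \<omega> + \<beta> * (n * c * \<omega>)" by (simp add: algebra_simps)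
            show ?thesis using a1 a2 a3 a4 a5 wS[OF True] by linarith
          qed
          then have "(\<beta> * \<bar>d k\<bar>)^2 \<le> ((2 + \<beta>*n*c) * \<omega>)^2" using bpos by (intro power_mono) auto
          then have h: "\<beta>^2 * (d k)^2 \<le> (2 + \<beta>*n*c)^2 * \<omega>^2" by (simp add: power_mult_distrib)
          have "\<bar>\<tau> k\<bar> = \<beta>/2 * (d k)^2" unfolding \<tau>_def using eS[OF True] bpos by simp
          also have "\<dots> = (\<beta>^2 * (d k)^2) / (2*\<beta>)" using bpos by (simp add: power2_eq_square field_simps)
          also have "\<dots> \<le> ((2 + \<beta>*n*c)^2 * \<omega>^2) / (2*\<beta>)" using h bpos by (intro divide_right_mono) auto
          also have "\<dots> = (2 + \<beta>*n*c)^2/(2*\<beta>) * \<omega>^2" by simp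
          finally show ?thesis by (rule goal[rotated]) (unfold K1_def, insert parts, linarith)
        next
          case kS: False
          have pk0: "p k \<ge> 0" using pnn[OF that] .
          show ?thesis
          proof (cases "e k = 0")
            case True
            have "\<bar>\<tau> k\<bar> = \<beta>/2 * (p k)^2" unfolding \<tau>_def using True pT(2)[OF that kS] bpos by simp
            also have "\<dots> \<le> \<beta>/2 * (c * \<omega>)^2" using pT_le[OF that kS] pk0 bpos
              by (intro mult_left_mono power_mono) auto
            also have "\<dots> = \<beta>/2*c^2 * \<omega>^2" by (simp add: power_mult_distrib)
            finally show ?thesis by (rule goal[rotated]) (unfold K1_def, insert parts, linarith)
          next
            case False
            have h: "p k * r0^2 \<le> 4 * \<omega>^3" by (rule pT_e[OF that kS False])
            have pk: "p k \<le> \<omega>"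
            proof -
              have "4 * \<omega>^3 = (4 * \<omega>^2) * \<omega>" by (simp add: power3_eq_cube power2_eq_square)
              also have "\<dots> \<le> r0^2 * \<omega>"
              proof -
                have "\<omega>^2 \<le> (r0/8)^2" using w_nn w_lt by (intro power_mono) auto
                then have "64 * \<omega>^2 \<le> r0^2" by (simp add: power_divide)
          then have "4 * \<omega>^2 \<le> r0^2" using zero_le_power2[of \<omega>] by linarith
                then show ?thesis using w_nn by (intro mult_right_mono) auto
              qed
              finally have "p k * r0^2 \<le> \<omega> * r0^2" using h by (simp add: mult.commute)
              then show "p k \<le> \<omega>" using r0_pos by simp
            qed
            have pk2: "p k \<le> 4 * \<omega>0 / r0^2 * \<omega>^2"
            proof -
              have "p k * r0^2 \<le> 4 * \<omega>^3" by (rule h)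
              also have "\<dots> = 4 * \<omega> * \<omega>^2" by (simp add: power3_eq_cube power2_eq_square)
              also have "\<dots> \<le> 4 * \<omega>0 * \<omega>^2" using wsmall by (intro mult_right_mono) auto
              finally show ?thesis using r0_pos by (simp add: field_simps)
            qed
            have "\<bar>\<tau> k\<bar> \<le> \<bar>e k\<bar> * p k + \<beta>/2 * (p k)^2"
              unfolding \<tau>_def pT(2)[OF that kS] using pk0 bpos by (simp add: abs_mult abs_triangle_ineq[THEN order_trans])
            also have "\<dots> \<le> R * (4 * \<omega>0 / r0^2 * \<omega>^2) + \<beta>/2 * \<omega>^2"
            proof (intro add_mono)
              show "\<bar>e k\<bar> * p k \<le> R * (4 * \<omega>0 / r0^2 * \<omega>^2)"
                using R_ge[OF that] pk2 pk0 R_nn by (intro mult_mono) auto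
              show "\<beta>/2 * (p k)^2 \<le> \<beta>/2 * \<omega>^2" using pk pk0 bpos by (intro mult_left_mono power_mono) auto
            qed
            also have "\<dots> = (4*R*\<omega>0/r0^2 + \<beta>/2) * \<omega>^2" by (simp add: algebra_simps)
            finally show ?thesis by (rule goal[rotated]) (unfold K1_def, insert parts, linarith)
          qed
        qed
      qed
      have "(\<Sum>k\<in>I. \<bar>\<tau> k\<bar>) \<le> (\<Sum>k\<in>I. K1 * \<omega>^2)" using tau_le by (intro sum_mono) auto
      also have "\<dots> = n * K1 * \<omega>^2" unfolding I_def by simp
      also have "\<dots> \<le> K * \<omega>^2"
      proof -
        have "n * K1 \<le> K" unfolding K_def using M_nn w0_pos by simp
        then show ?thesis by (intro mult_right_mono) auto
      qed
      finally show ?thesis using absF by linarith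
    qed
  qed
qed


lemma cmod_le_cdist: assumes "k < n" shows "cmod (y k - z k) \<le> cdist n y z"
proof -
  have "(cmod (y k - z k))^2 \<le> (\<Sum>k<n. (cmod (y k - z k))^2)"
    using assms by (intro member_le_sum) auto
  then have "sqrt ((cmod (y k - z k))^2) \<le> cdist n y z" unfolding cdist_def by (rule real_sqrt_le_mono)
  then show ?thesis by simp
qed

lemma cmod_le1: assumes "y \<in> csphere n" "k < n" shows "cmod (y k) \<le> 1"
proof -
  have "(cmod (y k))^2 \<le> (\<Sum>k<n. (cmod (y k))^2)"
    using assms by (intro member_le_sum) auto
  then have "(cmod (y k))^2 \<le> 1^2" using assms unfolding csphere_def by simp
  then show ?thesis by (rule power2_le_imp_le) simp
qed

lemma sqdiff_le: assumes "y \<in> csphere n" "z \<in> csphere n" "k < n"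
  shows "\<bar>(cmod (y k))^2 - (cmod (z k))^2\<bar> \<le> 2 * cdist n y z"
proof -
  have "\<bar>(cmod (y k))^2 - (cmod (z k))^2\<bar> = \<bar>cmod (y k) - cmod (z k)\<bar> * (cmod (y k) + cmod (z k))"
  proof -
    have "(cmod (y k))^2 - (cmod (z k))^2 = (cmod (y k) - cmod (z k)) * (cmod (y k) + cmod (z k))"
      by (simp add: power2_eq_square algebra_simps)
    then show ?thesis by (simp only: abs_mult) simp
  qed
  also have "\<dots> \<le> cmod (y k - z k) * 2"
    using cmod_le1[OF assms(1,3)] cmod_le1[OF assms(2,3)] norm_triangle_ineq3[of "y k" "z k"]
    by (intro mult_mono) auto
  also have "\<dots> \<le> cdist n y z * 2" using cmod_le_cdist[OF assms(3)] by simp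
  finally show ?thesis by simp
qed

lemma part1:
  fixes n :: nat and a :: "nat \<Rightarrow> real" and \<beta> :: real
  assumes bpos: "\<beta> > 0"
  shows "kl_holds n a \<beta> (1/4)"
  unfolding kl_holds_def
proof (intro allI impI)
  fix z assume st: "stationary n a \<beta> z"
  have zS: "z \<in> csphere n" using st unfolding stationary_def by auto
  define q where "q k = (cmod (z k))^2" for k
  define \<mu> where "\<mu> = lam n a \<beta> z"
  have qnn: "\<forall>k<n. q k \<ge> 0" unfolding q_def by simp
  have qsum: "(\<Sum>k<n. q k) = 1" using zS unfolding csphere_def q_def by simp
  have "gradnorm n a \<beta> z = 0" using st unfolding stationary_def by auto
  then have "sqrt (\<Sum>k<n. q k * (a k/2 + \<beta> * q k - \<mu>)^2) = 0"
    unfolding gradnorm_real q_def \<mu>_def by simp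
  then have "(\<Sum>k<n. q k * (a k/2 + \<beta> * q k - \<mu>)^2) = 0" by simp
  then have "\<forall>k\<in>{..<n}. q k * (a k/2 + \<beta> * q k - \<mu>)^2 = 0"
    by (subst sum_nonneg_eq_0_iff[symmetric]) (auto simp: q_def)
  then have stat: "\<forall>k<n. q k > 0 \<longrightarrow> a k / 2 + \<beta> * q k = \<mu>"
    by (metis (no_types, lifting) lessThan_iff less_irrefl mult_eq_0_iff power_eq_0_iff right_minus_eq)
  obtain \<epsilon> K where eps: "\<epsilon> > 0" and Kpos: "K > 0" and
    main: "\<And>p s \<omega>. (\<forall>k<n. p k \<ge> 0) \<Longrightarrow> (\<Sum>k<n. p k) = 1 \<Longrightarrow> (\<forall>k<n. \<bar>p k - q k\<bar> < \<epsilon>) \<Longrightarrow> \<omega> \<ge> 0 \<Longrightarrow>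
     (\<Sum>k<n. p k * (a k/2 + \<beta> * p k - \<mu> - s)^2) \<le> \<omega>^3 \<Longrightarrow>
     \<bar>(\<Sum>k<n. a k/2 * p k + \<beta>/2 * (p k)^2) - (\<Sum>k<n. a k/2 * q k + \<beta>/2 * (q k)^2)\<bar> \<le> K * \<omega>^2"
    using main_real[OF bpos qnn qsum stat] by blast
  define \<eta> where "\<eta> = K powr (3/4) + 1"
  show "loj_at n a \<beta> (1/4) z"
    unfolding loj_at_def
  proof (rule exI[of _ "\<epsilon>/2"], intro conjI, simp add: eps, rule exI[of _ \<eta>], intro conjI ballI impI)
    show "\<eta> > 0" unfolding \<eta>_def by (simp add: add_nonneg_pos)
    fix y assume yS: "y \<in> csphere n" and dy: "cdist n y z < \<epsilon>/2"
    define p where "p k = (cmod (y k))^2" for k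
    have pnn: "\<forall>k<n. p k \<ge> 0" unfolding p_def by simp
    have psum: "(\<Sum>k<n. p k) = 1" using yS unfolding csphere_def p_def by simp
    have pclose: "\<forall>k<n. \<bar>p k - q k\<bar> < \<epsilon>"
      using sqdiff_le[OF yS zS] dy unfolding p_def q_def by fastforce
    define V where "V = (\<Sum>k<n. p k * (a k/2 + \<beta> * p k - lam n a \<beta> y)^2)"
    have V_nn: "V \<ge> 0" unfolding V_def using pnn by (intro sum_nonneg) auto
    have gn: "gradnorm n a \<beta> y = sqrt 2 * sqrt V" unfolding gradnorm_real V_def p_def by simp
    have dF: "fobj n a \<beta> y - fobj n a \<beta> z = (\<Sum>k<n. a k/2 * p k + \<beta>/2 * (p k)^2) - (\<Sum>k<n. a k/2 * q k + \<beta>/2 * (q k)^2)"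
      unfolding fobj_real p_def q_def by (simp add: mult.commute)
    define s where "s = lam n a \<beta> y - \<mu>"
    have Vs: "(\<Sum>k<n. p k * (a k/2 + \<beta> * p k - \<mu> - s)^2) = V" unfolding V_def s_def by (simp add: algebra_simps)
    have gnn: "gradnorm n a \<beta> y \<ge> 0" unfolding gn using V_nn by simp
    show "\<bar>fobj n a \<beta> y - fobj n a \<beta> z\<bar> powr (1 - 1/4) \<le> \<eta> * gradnorm n a \<beta> y"
    proof (cases "V = 0")
      case True
      have "\<bar>fobj n a \<beta> y - fobj n a \<beta> z\<bar> \<le> K * 0^2"
        unfolding dF by (rule main[OF pnn psum pclose, of 0 s]) (use Vs True in auto)
      then have "fobj n a \<beta> y - fobj n a \<beta> z = 0" by simp
      then show ?thesis using gnn \<open>\<eta> > 0\<close> by simp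
    next
      case False
      then have Vpos: "V > 0" using V_nn by simp
      define \<omega> where "\<omega> = V powr (1/3)"
      have w3: "\<omega>^3 = V"
      proof -
        have "\<omega>^3 = \<omega> powr (real 3)" unfolding \<omega>_def using Vpos by (simp add: powr_realpow)
        also have "\<dots> = V" unfolding \<omega>_def using Vpos by (simp add: powr_powr)
        finally show ?thesis .
      qed
      have w2: "\<omega>^2 = V powr (2/3)"
      proof -
        have "\<omega>^2 = \<omega> powr (real 2)" unfolding \<omega>_def using Vpos by (simp add: powr_realpow)
        also have "\<dots> = V powr (2/3)" unfolding \<omega>_def using Vpos by (simp add: powr_powr)
        finally show ?thesis .
      qed
      have bnd: "\<bar>fobj n a \<beta> y - fobj n a \<beta> z\<bar> \<le> K * \<omega>^2"
        unfolding dF by (rule main[OF pnn psum pclose, of \<omega> s]) (use Vs w3 Vpos in \<open>auto simp: \<omega>_def\<close>)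
      have "\<bar>fobj n a \<beta> y - fobj n a \<beta> z\<bar> powr (1 - 1/4) \<le> (K * \<omega>^2) powr (3/4)"
        using bnd powr_mono2[of "3/4" "\<bar>fobj n a \<beta> y - fobj n a \<beta> z\<bar>" "K * \<omega>^2"] by simp
      also have "\<dots> = K powr (3/4) * (V powr (2/3)) powr (3/4)"
        using Kpos Vpos unfolding w2 by (simp add: powr_mult)
      also have "(V powr (2/3)) powr (3/4) = sqrt V" using Vpos by (simp add: powr_powr powr_half_sqrt[symmetric])
      also have "K powr (3/4) * sqrt V \<le> \<eta> * gradnorm n a \<beta> y"
      proof -
        have "K powr (3/4) \<le> \<eta>" unfolding \<eta>_def by simp
        moreover have "sqrt V \<le> sqrt 2 * sqrt V"
          using V_nn mult_right_mono[of 1 "sqrt 2" "sqrt V"] by simp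
        ultimately have "K powr (3/4) * sqrt V \<le> \<eta> * (sqrt 2 * sqrt V)"
          using V_nn \<open>\<eta> > 0\<close> by (intro mult_mono) auto
        then show ?thesis unfolding gn by (simp add: mult.assoc)
      qed
      finally show ?thesis .
    qed
  qed
qed


definition ex_a :: "nat \<Rightarrow> real" where "ex_a k = (if k = 1 then 2 else 0)"
definition ex_z :: "nat \<Rightarrow> complex" where "ex_z k = (if k = 0 then 1 else 0)"
definition ex_y :: "real \<Rightarrow> nat \<Rightarrow> complex" where
  "ex_y t k = (if k = 0 then complex_of_real (sqrt (1-t)) else if k = 1 then complex_of_real (sqrt t) else 0)"

lemma sum2: "(\<Sum>k<(2::nat). f k) = f 0 + (f 1 :: real)"
  by (simp add: numeral_2_eq_2)

lemma ex_z_stat: "stationary 2 ex_a 1 ex_z"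
proof -
  have zS: "ex_z \<in> csphere 2" unfolding csphere_def by (simp add: sum2 ex_z_def)
  have l: "lam 2 ex_a 1 ex_z = 1" unfolding lam_real by (simp add: sum2 ex_z_def ex_a_def)
  have "gradnorm 2 ex_a 1 ex_z = 0" unfolding gradnorm_real l by (simp add: sum2 ex_z_def ex_a_def)
  with zS show ?thesis unfolding stationary_def by simp
qed

lemma ex_y_facts:
  assumes t0: "0 < t" and t1: "t < 1"
  shows "ex_y t \<in> csphere 2"
    and "fobj 2 ex_a 1 (ex_y t) - fobj 2 ex_a 1 ex_z = t^2"
    and "gradnorm 2 ex_a 1 (ex_y t) = sqrt 2 * sqrt (4 * t^3 * (1 - t))"
    and "cdist 2 (ex_y t) ex_z \<le> sqrt (2 * t)"
proof -
  have c0: "(cmod (ex_y t 0))^2 = 1 - t" using t1 by (simp add: ex_y_def)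
  have c1: "(cmod (ex_y t 1))^2 = t" using t0 by (simp add: ex_y_def)
  show "ex_y t \<in> csphere 2" unfolding csphere_def using c0 c1 by (simp add: sum2)
  have fy: "fobj 2 ex_a 1 (ex_y t) = 1/2 + t^2" unfolding fobj_real sum2 c0 c1
    by (simp add: ex_a_def power2_eq_square field_simps)
  have fz: "fobj 2 ex_a 1 ex_z = 1/2" unfolding fobj_real sum2 by (simp add: ex_z_def ex_a_def)
  show "fobj 2 ex_a 1 (ex_y t) - fobj 2 ex_a 1 ex_z = t^2" using fy fz by simp
  have l: "lam 2 ex_a 1 (ex_y t) = 1 - t + 2 * t^2" unfolding lam_real sum2 c0 c1
    by (simp add: ex_a_def power2_eq_square field_simps)
  show "gradnorm 2 ex_a 1 (ex_y t) = sqrt 2 * sqrt (4 * t^3 * (1 - t))"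
    unfolding gradnorm_real sum2 c0 c1 l
    by (simp add: ex_a_def power2_eq_square power3_eq_cube field_simps)
  have "ex_y t 0 - ex_z 0 = complex_of_real (sqrt (1-t) - 1)" by (simp add: ex_y_def ex_z_def)
  then have "(cmod (ex_y t 0 - ex_z 0))^2 = (sqrt (1-t) - 1)^2" by (simp only: norm_of_real power2_abs)
  also have "\<dots> = (1 - sqrt (1-t))^2" by (simp add: power2_commute)
  also have "\<dots> \<le> t^2"
  proof -
    have "1 - t \<le> sqrt (1-t)" using t0 t1 by (simp add: real_le_rsqrt power2_eq_square)
    moreover have "sqrt (1-t) \<le> 1" using t0 by simp
    ultimately show ?thesis using t0 by (intro power_mono) auto
  qed
  also have "\<dots> \<le> t" using t0 t1 by (simp add: power2_eq_square mult_left_le)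
  finally have h0: "(cmod (ex_y t 0 - ex_z 0))^2 \<le> t" .
  have h1: "(cmod (ex_y t 1 - ex_z 1))^2 = t" using t0 by (simp add: ex_y_def ex_z_def)
  show "cdist 2 (ex_y t) ex_z \<le> sqrt (2 * t)" unfolding cdist_def sum2 using h0 h1
    by (intro real_sqrt_le_mono) simp
qed

lemma part2_fail:
  assumes th: "\<theta> > 1/4" "\<theta> \<le> 1/2"
  shows "\<not> loj_at 2 ex_a 1 \<theta> ex_z"
proof
  assume "loj_at 2 ex_a 1 \<theta> ex_z"
  then obtain \<delta> \<eta> where dpos: "\<delta> > 0" and epos: "\<eta> > 0" and
    L: "\<And>y. y \<in> csphere 2 \<Longrightarrow> cdist 2 y ex_z < \<delta> \<Longrightarrow>
      \<bar>fobj 2 ex_a 1 y - fobj 2 ex_a 1 ex_z\<bar> powr (1 - \<theta>) \<le> \<eta> * gradnorm 2 ex_a 1 y"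
    unfolding loj_at_def by blast
  define \<alpha> where "\<alpha> = 2 * \<theta> - 1/2"
  have apos: "\<alpha> > 0" unfolding \<alpha>_def using th by simp
  define C where "C = 4 * \<eta>"
  have Cpos: "C > 0" unfolding C_def using epos by simp
  define t where "t = min (1/2) (min (\<delta>^2/4) (((1/C) powr (1/\<alpha>))/2))"
  have t0: "t > 0" unfolding t_def using dpos Cpos by simp
  have t1: "t < 1" unfolding t_def by simp
  have tpow: "t powr \<alpha> < 1/C"
  proof -
    have "t \<le> ((1/C) powr (1/\<alpha>))/2" unfolding t_def by simp
    moreover have "(1/C) powr (1/\<alpha>) > 0" using Cpos by simp
    ultimately have "t < (1/C) powr (1/\<alpha>)" by linarith
    then have "t powr \<alpha> < ((1/C) powr (1/\<alpha>)) powr \<alpha>" using t0 apos by (intro powr_less_mono2) auto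
    also have "\<dots> = 1/C" using apos Cpos by (simp add: powr_powr)
    finally show ?thesis .
  qed
  have cd: "cdist 2 (ex_y t) ex_z < \<delta>"
  proof -
    have "cdist 2 (ex_y t) ex_z \<le> sqrt (2 * t)" using ex_y_facts(4)[OF t0 t1] .
    also have "\<dots> < sqrt (\<delta>^2)"
    proof (rule real_sqrt_less_mono)
      have "t \<le> \<delta>^2/4" unfolding t_def by simp
      then show "2 * t < \<delta>^2" using t0 by linarith
    qed
    also have "\<dots> = \<delta>" using dpos by simp
    finally show ?thesis .
  qed
  have ineq: "(t^2) powr (1 - \<theta>) \<le> \<eta> * (sqrt 2 * sqrt (4 * t^3 * (1 - t)))"
    using L[OF ex_y_facts(1)[OF t0 t1] cd] ex_y_facts(2,3)[OF t0 t1] by simp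
  have rhs: "\<eta> * (sqrt 2 * sqrt (4 * t^3 * (1 - t))) \<le> C * (t * sqrt t)"
  proof -
    have "sqrt (4 * t^3 * (1 - t)) \<le> sqrt (4 * t^3)"
      using t0 t1 by (intro real_sqrt_le_mono) (simp add: mult_left_le)
    also have "sqrt (4 * t^3) = 2 * (t * sqrt t)" using t0
      by (simp add: power3_eq_cube real_sqrt_mult)
    finally have a: "sqrt (4 * t^3 * (1 - t)) \<le> 2 * (t * sqrt t)" .
    have b: "sqrt 2 \<le> 2" using real_sqrt_le_mono[of 2 "2^2"] by simp
    have "sqrt 2 * sqrt (4 * t^3 * (1 - t)) \<le> 2 * (2 * (t * sqrt t))"
      using a b t0 t1 by (intro mult_mono) auto
    then show ?thesis unfolding C_def using epos by (simp add: mult_left_mono)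
  qed
  have lhs: "(t^2) powr (1 - \<theta>) = (t * sqrt t) * inverse (t powr \<alpha>)"
  proof -
    have "t^2 = t powr (real 2)" using t0 by (simp only: powr_realpow)
    then have "(t^2) powr (1 - \<theta>) = (t powr 2) powr (1 - \<theta>)" by simp
    also have "\<dots> = t powr (2 * (1 - \<theta>))" by (simp only: powr_powr)
    also have "2 * (1 - \<theta>) = 1 + 1/2 + (- \<alpha>)" unfolding \<alpha>_def by simp
    also have "t powr (1 + 1/2 + (- \<alpha>)) = t * sqrt t * inverse (t powr \<alpha>)"
    proof -
      have "t powr (1 + 1/2 + (- \<alpha>)) = t powr 1 * t powr (1/2) * t powr (- \<alpha>)" by (simp only: powr_add)
      also have "\<dots> = t * sqrt t * inverse (t powr \<alpha>)"
        using t0 by (simp only: powr_one powr_half_sqrt powr_minus less_imp_le)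
      finally show ?thesis .
    qed
    finally show ?thesis .
  qed
  have "C * (t * sqrt t) < (t * sqrt t) * inverse (t powr \<alpha>)"
  proof -
    have tt: "t * sqrt t > 0" using t0 by simp
    have "inverse (1/C) < inverse (t powr \<alpha>)" using tpow t0
      by (intro less_imp_inverse_less) auto
    then have "C < inverse (t powr \<alpha>)" by simp
    then have "C * (t * sqrt t) < inverse (t powr \<alpha>) * (t * sqrt t)" using tt by (rule mult_strict_right_mono)
    then show ?thesis by (simp only: mult.commute)
  qed
  with ineq rhs lhs show False by linarith
qed

lemma part2: "is_kl_exponent 2 ex_a 1 (1/4)"
  unfolding is_kl_exponent_def
proof (intro conjI ballI impI)
  show "1/4 \<in> {0<..(1::real)/2}" by simp
  show "kl_holds 2 ex_a 1 (1/4)" by (rule part1) simp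
  fix \<theta>' :: real assume "\<theta>' \<in> {0<..1/2}" and kh: "kl_holds 2 ex_a 1 \<theta>'"
  show "\<theta>' \<le> 1/4"
  proof (rule ccontr)
    assume "\<not> \<theta>' \<le> 1/4"
    then have "\<not> loj_at 2 ex_a 1 \<theta>' ex_z" using \<open>\<theta>' \<in> {0<..1/2}\<close> by (intro part2_fail) auto
    then show False using kh ex_z_stat unfolding kl_holds_def by blast
  qed
qed

theorem theorem15:
  shows "(\<forall>n (a :: nat \<Rightarrow> real) (\<beta>::real). \<beta> > 0 \<longrightarrow> kl_holds n a \<beta> (1/4))
       \<and> (\<exists>n (a :: nat \<Rightarrow> real) (\<beta>::real). \<beta> > 0 \<and> is_kl_exponent n a \<beta> (1/4))"
proof (intro conjI allI impI)
  fix n :: nat and a :: "nat \<Rightarrow> real" and \<beta> :: real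
  assume "\<beta> > 0"
  then show "kl_holds n a \<beta> (1/4)" by (rule part1)
next
  show "\<exists>n (a :: nat \<Rightarrow> real) (\<beta>::real). \<beta> > 0 \<and> is_kl_exponent n a \<beta> (1/4)"
    using part2 by (intro exI[of _ 2] exI[of _ ex_a] exI[of _ 1]) simp
qed

end
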